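(* Let $q\leqslant n+1$. For any nonzero $\psi=(F,G)\in\mathcal H_{\mathbf d}[q\,;\,s]$, $\kappa_*(\psi)\leqslant\dfrac{\|\psi\|}{d(\psi,\Sigma_* )}$, where distance and norm are those induced by the Weyl inner product.
   Context: $\mathcal H_{\mathbf d}[q]$: $q$-tuples of real homogeneous polynomials in $X_0,\dots,X_n$ of degrees $d_1,\dots,d_q$ with the Weyl inner product ($\langle h,h'\rangle=\sum_{|a|=d}\binom{d}{a}^{-1}h_ah'_a$ for degree-$d$ forms with coefficients $h_a,h'_a$, $\binom da$ multinomial; summed over components). $\mathcal H_{\mathbf d}[q\,;\,s]$: pairs $(F,G)$ with $F$ a $q$-tuple and $G$ an $s$-tuple, i.e. $\mathcal H_{\mathbf d}[q+s]$. For $F\in\mathcal H_{\mathbf d}[q]$, $x\in\mathbb S^n$: $T_x=\{x\}^\perp$, $\Delta=\mathrm{diag}(\sqrt{d_i})$, $\mu_{\mathrm{proj}}(F,x)=\|F\|\,\|(\mathrm DF(x)|_{T_x})^\dagger\Delta\|$ if $\mathrm DF(x)|_{T_x}$ surjective, else $\infty$; $\kappa(F,x)=(\mu_{\mathrm{proj}}(F,x)^{-2}+\|F(x)\|^2/\|F\|^2)^{-1/2}$ (conventions $\infty^{-1}=0$, $0^{-1}=\infty$, $\kappa(0,x)=\infty$); $\kappa(F)=\max_{x\in\mathbb S^n}\kappa(F,x)$. For a subtuple $L$ of $G$, $F^L$ is $F$ with the polynomials of $L$ appended. $\kappa_*(F,G)=\max\{\kappa(F^L):L\subseteq G,\ q+|L|\leq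 n+1\}$, and $\Sigma_*=\{\psi\in\mathcal H_{\mathbf d}[q\,;\,s]:\kappa_*(\psi)=\infty\}$. *)

theory Defs
  imports Complex_Main "HOL-Library.Extended_Real"
begin

text \<open>Variables X_0..X_n; a point x is a function nat => real whose
components beyond n are zero. A homogeneous polynomial of degree k is given by its
coefficient function on exponent vectors a :: nat => nat (supported in {0..n},
total degree k). A system of polynomials is a function nat => (coefficients);
a subsystem is selected by a finite index set I; d :: nat => nat gives the degrees.\<close>

definition mons :: "nat \<Rightarrow> nat \<Rightarrow> (nat \<Rightarrow> nat) set" where
  "mons n k = {a. (\<forall>i. n < i \<longrightarrow> a i = 0) \<and> sum a {..n} = k}"

definition multinom :: "nat \<Rightarrow> nat \<Rightarrow> (nat \<Rightarrow> nat) \<Rightarrow> real" where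
  "multinom n k a = fact k / (\<Prod>j\<le>n. fact (a j))"

definition Hd :: "nat \<Rightarrow> (nat \<Rightarrow> nat) \<Rightarrow> nat \<Rightarrow> (nat \<Rightarrow> (nat \<Rightarrow> nat) \<Rightarrow> real) set" where
  "Hd n d N = {P. \<forall>i a. (N \<le> i \<or> a \<notin> mons n (d i)) \<longrightarrow> P i a = 0}"

definition weyl_inner :: "nat \<Rightarrow> (nat \<Rightarrow> nat) \<Rightarrow> nat set
    \<Rightarrow> (nat \<Rightarrow> (nat \<Rightarrow> nat) \<Rightarrow> real) \<Rightarrow> (nat \<Rightarrow> (nat \<Rightarrow> nat) \<Rightarrow> real) \<Rightarrow> real" where
  "weyl_inner n d I P Q = (\<Sum>i\<in>I. \<Sum>a\<in>mons n (d i). P i a * Q i a / multinom n (d i) a)"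

definition weyl_norm :: "nat \<Rightarrow> (nat \<Rightarrow> nat) \<Rightarrow> nat set \<Rightarrow> (nat \<Rightarrow> (nat \<Rightarrow> nat) \<Rightarrow> real) \<Rightarrow> real" where
  "weyl_norm n d I P = sqrt (weyl_inner n d I P P)"

definition peval :: "nat \<Rightarrow> nat \<Rightarrow> ((nat \<Rightarrow> nat) \<Rightarrow> real) \<Rightarrow> (nat \<Rightarrow> real) \<Rightarrow> real" where
  "peval n k p x = (\<Sum>a\<in>mons n k. p a * (\<Prod>j\<le>n. x j ^ a j))"

definition pderiv_at :: "nat \<Rightarrow> nat \<Rightarrow> ((nat \<Rightarrow> nat) \<Rightarrow> real) \<Rightarrow> nat \<Rightarrow> (nat \<Rightarrow> real) \<Rightarrow> real" where
  "pderiv_at n k p j x = (\<Sum>a\<in>mons n k. p a * real (a j) *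
      (\<Prod>l\<le>n. x l ^ (if l = j then a l - 1 else a l)))"

definition DF :: "nat \<Rightarrow> (nat \<Rightarrow> nat) \<Rightarrow> (nat \<Rightarrow> (nat \<Rightarrow> nat) \<Rightarrow> real)
    \<Rightarrow> (nat \<Rightarrow> real) \<Rightarrow> (nat \<Rightarrow> real) \<Rightarrow> nat \<Rightarrow> real" where
  "DF n d P x u = (\<lambda>i. \<Sum>j\<le>n. pderiv_at n (d i) (P i) j x * u j)"

definition sphere_n :: "nat \<Rightarrow> (nat \<Rightarrow> real) set" where
  "sphere_n n = {x. (\<forall>i. n < i \<longrightarrow> x i = 0) \<and> (\<Sum>j\<le>n. (x j)\<^sup>2) = 1}"

definition tangent :: "nat \<Rightarrow> (nat \<Rightarrow> real) \<Rightarrow> (nat \<Rightarrow> real) set" where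
  "tangent n x = {u. (\<forall>i. n < i \<longrightarrow> u i = 0) \<and> (\<Sum>j\<le>n. u j * x j) = 0}"

definition surj_on_T :: "nat \<Rightarrow> (nat \<Rightarrow> nat) \<Rightarrow> nat set \<Rightarrow> (nat \<Rightarrow> (nat \<Rightarrow> nat) \<Rightarrow> real)
    \<Rightarrow> (nat \<Rightarrow> real) \<Rightarrow> bool" where
  "surj_on_T n d I P x = (\<forall>w. \<exists>u\<in>tangent n x. \<forall>i\<in>I. DF n d P x u i = w i)"

text \<open>Moore-Penrose pseudoinverse of the (surjective) map DF(x)|_{T_x} : T_x -> R^I,
  applied to w: the unique preimage in T_x orthogonal to the kernel.\<close>
definition pinv :: "nat \<Rightarrow> (nat \<Rightarrow> nat) \<Rightarrow> nat set \<Rightarrow> (nat \<Rightarrow> (nat \<Rightarrow> nat) \<Rightarrow> real)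
    \<Rightarrow> (nat \<Rightarrow> real) \<Rightarrow> (nat \<Rightarrow> real) \<Rightarrow> (nat \<Rightarrow> real)" where
  "pinv n d I P x w = (THE u. u \<in> tangent n x \<and> (\<forall>i\<in>I. DF n d P x u i = w i) \<and>
      (\<forall>v\<in>tangent n x. (\<forall>i\<in>I. DF n d P x v i = 0) \<longrightarrow> (\<Sum>j\<le>n. u j * v j) = 0))"

text \<open>Operator norm of (DF(x)|_{T_x})^dagger Delta, Delta = diag(sqrt d_i).\<close>
definition pinv_Delta_norm :: "nat \<Rightarrow> (nat \<Rightarrow> nat) \<Rightarrow> nat set \<Rightarrow> (nat \<Rightarrow> (nat \<Rightarrow> nat) \<Rightarrow> real)
    \<Rightarrow> (nat \<Rightarrow> real) \<Rightarrow> real" where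
  "pinv_Delta_norm n d I P x = Sup {sqrt (\<Sum>j\<le>n. (pinv n d I P x (\<lambda>i. sqrt (real (d i)) * w i) j)\<^sup>2)
       | w. (\<Sum>i\<in>I. (w i)\<^sup>2) \<le> 1}"

definition mu_proj :: "nat \<Rightarrow> (nat \<Rightarrow> nat) \<Rightarrow> nat set \<Rightarrow> (nat \<Rightarrow> (nat \<Rightarrow> nat) \<Rightarrow> real)
    \<Rightarrow> (nat \<Rightarrow> real) \<Rightarrow> ereal" where
  "mu_proj n d I P x = (if surj_on_T n d I P x
      then ereal (weyl_norm n d I P * pinv_Delta_norm n d I P x) else \<infinity>)"

text \<open>kappa(F,x) with conventions inverse(infinity) = 0, inverse 0 = infinity, kappa(0,x) = infinity.\<close>
definition kappa_at :: "nat \<Rightarrow> (nat \<Rightarrow> nat) \<Rightarrow> nat set \<Rightarrow> (nat \<Rightarrow> (nat \<Rightarrow> nat) \<Rightarrow> real)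
    \<Rightarrow> (nat \<Rightarrow> real) \<Rightarrow> ereal" where
  "kappa_at n d I P x =
    (if weyl_norm n d I P = 0 then \<infinity> else
      (let m = mu_proj n d I P x;
           minv2 = (if m = \<infinity> then 0 else if m = 0 then \<infinity> else ereal (1 / (real_of_ereal m)\<^sup>2));
           t = minv2 + ereal ((\<Sum>i\<in>I. (peval n (d i) (P i) x)\<^sup>2) / (weyl_norm n d I P)\<^sup>2)
       in if t = \<infinity> then 0 else if t = 0 then \<infinity> else ereal (1 / sqrt (real_of_ereal t))))"

definition kappa :: "nat \<Rightarrow> (nat \<Rightarrow> nat) \<Rightarrow> nat set \<Rightarrow> (nat \<Rightarrow> (nat \<Rightarrow> nat) \<Rightarrow> real) \<Rightarrow> ereal" where
  "kappa n d I P = (SUP x\<in>sphere_n n. kappa_at n d I P x)"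

text \<open>kappa_*(F,G) for F = components 0..q-1, G = components q..q+s-1: the maximum of
  kappa(F^L) over subtuples L of G with q + |L| <= n+1.\<close>
definition kappa_star :: "nat \<Rightarrow> (nat \<Rightarrow> nat) \<Rightarrow> nat \<Rightarrow> nat \<Rightarrow> (nat \<Rightarrow> (nat \<Rightarrow> nat) \<Rightarrow> real) \<Rightarrow> ereal" where
  "kappa_star n d q s P = (SUP L\<in>{L. L \<subseteq> {q..<q+s} \<and> q + card L \<le> n + 1}.
       kappa n d ({..<q} \<union> L) P)"

definition Sigma_star :: "nat \<Rightarrow> (nat \<Rightarrow> nat) \<Rightarrow> nat \<Rightarrow> nat \<Rightarrow> (nat \<Rightarrow> (nat \<Rightarrow> nat) \<Rightarrow> real) set" where
  "Sigma_star n d q s = {P \<in> Hd n d (q + s). kappa_star n d q s P = \<infinity>}"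

definition dist_Sigma_star :: "nat \<Rightarrow> (nat \<Rightarrow> nat) \<Rightarrow> nat \<Rightarrow> nat \<Rightarrow> (nat \<Rightarrow> (nat \<Rightarrow> nat) \<Rightarrow> real) \<Rightarrow> real" where
  "dist_Sigma_star n d q s P = Inf ((\<lambda>Q. weyl_norm n d {..<q+s} (\<lambda>i a. P i a - Q i a)) ` Sigma_star n d q s)"

end

theory Submission
  imports Defs "HOL-Library.FuncSet"
begin


lemma mons_le: "a \<in> mons n k \<Longrightarrow> j \<le> n \<Longrightarrow> a j \<le> k"
  unfolding mons_def by (auto intro!: member_le_sum[where f=a and A="{..n}" and i=j, simplified])

lemma mons_zero: "a \<in> mons n k \<Longrightarrow> n < j \<Longrightarrow> a j = 0"
  unfolding mons_def by auto

lemma finite_mons: "finite (mons n k)"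
proof -
  have "mons n k \<subseteq> (\<lambda>f i. if i \<le> n then f i else 0) ` (PiE {..n} (\<lambda>_. {..k}))"
  proof
    fix a assume a: "a \<in> mons n k"
    have "a = (\<lambda>i. if i \<le> n then restrict a {..n} i else 0)"
      using mons_zero[OF a] by (auto simp: fun_eq_iff)
    moreover have "restrict a {..n} \<in> PiE {..n} (\<lambda>_. {..k})"
      using mons_le[OF a] by auto
    ultimately show "a \<in> (\<lambda>f i. if i \<le> n then f i else 0) ` (PiE {..n} (\<lambda>_. {..k}))"
      by blast
  qed
  moreover have "finite (PiE {..n} (\<lambda>_. {..k::nat}))" by (rule finite_PiE) auto
  ultimately show ?thesis using finite_subset by blast
qed

lemma multinom_pos: "multinom n k a > 0"
  unfolding multinom_def by (auto intro!: divide_pos_pos prod_pos)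

definition bump :: "nat \<Rightarrow> (nat \<Rightarrow> nat) \<Rightarrow> nat \<Rightarrow> nat" where
  "bump l b = b(l := Suc (b l))"

lemma mons0: "mons n 0 = {\<lambda>_. 0}"
proof -
  have "a \<in> mons n 0 \<longleftrightarrow> a = (\<lambda>_. 0)" for a
  proof
    assume a: "a \<in> mons n 0"
    show "a = (\<lambda>_. 0)"
    proof
      fix j show "a j = 0"
        using mons_le[OF a, of j] mons_zero[OF a, of j] by (cases "j \<le> n") auto
    qed
  qed (auto simp: mons_def)
  thus ?thesis by auto
qed

lemma bump_image:
  assumes "l \<le> n"
  shows "bump l ` mons n k = {a \<in> mons n (Suc k). 0 < a l}"
proof (intro equalityI subsetI)
  fix a assume "a \<in> bump l ` mons n k"
  then obtain b where b: "b \<in> mons n k" and ab: "a = bump l b" by auto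
  have "sum a {..n} = sum b {..n} + 1"
  proof -
    have "sum a {..n} = a l + sum a ({..n} - {l})" using assms by (simp add: sum.remove)
    also have "sum a ({..n} - {l}) = sum b ({..n} - {l})" by (rule sum.cong) (auto simp: ab bump_def)
    also have "sum b {..n} = b l + sum b ({..n} - {l})" using assms by (simp add: sum.remove)
    ultimately show ?thesis by (simp add: ab bump_def)
  qed
  then show "a \<in> {a \<in> mons n (Suc k). 0 < a l}"
    using b assms by (auto simp: mons_def ab bump_def)
next
  fix a assume a: "a \<in> {a \<in> mons n (Suc k). 0 < a l}"
  define b where "b = a(l := a l - 1)"
  have ab: "a = bump l b" using a by (auto simp: b_def bump_def fun_eq_iff)
  have "sum a {..n} = sum b {..n} + 1"
  proof -
    have "sum a {..n} = a l + sum a ({..n} - {l})" using assms by (simp add: sum.remove)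
    also have "sum a ({..n} - {l}) = sum b ({..n} - {l})" by (rule sum.cong) (auto simp: b_def)
    also have "sum b {..n} = b l + sum b ({..n} - {l})" using assms by (simp add: sum.remove)
    ultimately show ?thesis using a by (simp add: b_def)
  qed
  hence "b \<in> mons n k" using a assms by (auto simp: mons_def b_def)
  thus "a \<in> bump l ` mons n k" using ab by auto
qed

lemma inj_bump: "inj (bump l)"
proof (rule injI)
  fix a b assume "bump l a = bump l b"
  hence "\<forall>j. bump l a j = bump l b j" by simp
  thus "a = b" by (auto simp: bump_def fun_eq_iff split: if_splits)
qed

lemma prod_bump:
  fixes w :: "nat \<Rightarrow> real"
  assumes "l \<le> n"
  shows "(\<Prod>j\<le>n. w j ^ bump l b j) = w l * (\<Prod>j\<le>n. w j ^ b j)"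
proof -
  have "(\<Prod>j\<le>n. w j ^ bump l b j) = w l ^ Suc (b l) * (\<Prod>j\<in>{..n}-{l}. w j ^ bump l b j)"
    using assms by (simp add: prod.remove bump_def)
  also have "(\<Prod>j\<in>{..n}-{l}. w j ^ bump l b j) = (\<Prod>j\<in>{..n}-{l}. w j ^ b j)"
    by (rule prod.cong) (auto simp: bump_def)
  also have "(\<Prod>j\<le>n. w j ^ b j) = w l ^ b l * (\<Prod>j\<in>{..n}-{l}. w j ^ b j)"
    using assms by (simp add: prod.remove)
  ultimately show ?thesis by simp
qed

lemma multinom_bump:
  assumes "l \<le> n"
  shows "real (Suc (b l)) * multinom n (Suc k) (bump l b) = real (Suc k) * multinom n k b"
proof -
  have "(\<Prod>j\<le>n. (fact (bump l b j)::real)) = fact (Suc (b l)) * (\<Prod>j\<in>{..n}-{l}. fact (bump l b j))"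
    using assms by (simp add: prod.remove bump_def)
  also have "(\<Prod>j\<in>{..n}-{l}. (fact (bump l b j)::real)) = (\<Prod>j\<in>{..n}-{l}. fact (b j))"
    by (rule prod.cong) (auto simp: bump_def)
  finally have 1: "(\<Prod>j\<le>n. (fact (bump l b j)::real)) = fact (Suc (b l)) * (\<Prod>j\<in>{..n}-{l}. fact (b j))" .
  have 2: "(\<Prod>j\<le>n. (fact (b j)::real)) = fact (b l) * (\<Prod>j\<in>{..n}-{l}. fact (b j))"
    using assms by (simp add: prod.remove)
  have pos: "(\<Prod>j\<in>{..n}-{l}. (fact (b j)::real)) > 0" by (rule prod_pos) auto
  show ?thesis unfolding multinom_def 1 2 using pos
    by (simp add: field_simps fact_Suc del: of_nat_Suc)
qed

lemma multinomial:
  fixes w :: "nat \<Rightarrow> real"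
  shows "(\<Sum>a\<in>mons n k. multinom n k a * (\<Prod>j\<le>n. w j ^ a j)) = (\<Sum>j\<le>n. w j) ^ k"
proof (induction k)
  case 0
  show ?case by (simp add: mons0 multinom_def)
next
  case (Suc k)
  have fin: "finite (mons n (Suc k))" by (rule finite_mons)
  have step: "(\<Sum>b\<in>mons n k. multinom n k b * (\<Prod>j\<le>n. w j ^ bump l b j))
      = (\<Sum>a\<in>mons n (Suc k). real (a l) / real (Suc k) * multinom n (Suc k) a * (\<Prod>j\<le>n. w j ^ a j))"
    if l: "l \<le> n" for l
  proof -
    have "(\<Sum>a\<in>mons n (Suc k). real (a l) / real (Suc k) * multinom n (Suc k) a * (\<Prod>j\<le>n. w j ^ a j))
        = (\<Sum>a\<in>{a \<in> mons n (Suc k). 0 < a l}. real (a l) / real (Suc k) * multinom n (Suc k) a * (\<Prod>j\<le>n. w j ^ a j))"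
      by (rule sum.mono_neutral_right) (auto simp: fin)
    also have "\<dots> = (\<Sum>a\<in>bump l ` mons n k. real (a l) / real (Suc k) * multinom n (Suc k) a * (\<Prod>j\<le>n. w j ^ a j))"
      by (simp add: bump_image[OF l])
    also have "\<dots> = (\<Sum>b\<in>mons n k. real (bump l b l) / real (Suc k) * multinom n (Suc k) (bump l b) * (\<Prod>j\<le>n. w j ^ bump l b j))"
      by (rule sum.reindex[unfolded comp_def]) (meson inj_bump inj_on_subset subset_UNIV)
    also have "\<dots> = (\<Sum>b\<in>mons n k. multinom n k b * (\<Prod>j\<le>n. w j ^ bump l b j))"
    proof (rule sum.cong)
      fix b
      have "real (bump l b l) * multinom n (Suc k) (bump l b) = real (Suc k) * multinom n k b"
        using multinom_bump[OF l, of b k] by (simp add: bump_def)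
      thus "real (bump l b l) / real (Suc k) * multinom n (Suc k) (bump l b) * (\<Prod>j\<le>n. w j ^ bump l b j) =
         multinom n k b * (\<Prod>j\<le>n. w j ^ bump l b j)"
        by (simp add: field_simps del: of_nat_Suc)
    qed simp
    finally show ?thesis by simp
  qed
  have "(\<Sum>j\<le>n. w j) ^ Suc k = (\<Sum>l\<le>n. w l * (\<Sum>b\<in>mons n k. multinom n k b * (\<Prod>j\<le>n. w j ^ b j)))"
    by (simp add: Suc.IH sum_distrib_right)
  also have "\<dots> = (\<Sum>l\<le>n. \<Sum>b\<in>mons n k. multinom n k b * (\<Prod>j\<le>n. w j ^ bump l b j))"
    by (rule sum.cong) (auto simp: sum_distrib_left prod_bump intro!: sum.cong)
  also have "\<dots> = (\<Sum>l\<le>n. \<Sum>a\<in>mons n (Suc k). real (a l) / real (Suc k) * multinom n (Suc k) a * (\<Prod>j\<le>n. w j ^ a j))"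
    by (rule sum.cong) (auto simp: step)
  also have "\<dots> = (\<Sum>a\<in>mons n (Suc k). (\<Sum>l\<le>n. real (a l)) / real (Suc k) * multinom n (Suc k) a * (\<Prod>j\<le>n. w j ^ a j))"
    by (subst sum.swap) (simp add: sum_distrib_right sum_divide_distrib)
  also have "\<dots> = (\<Sum>a\<in>mons n (Suc k). multinom n (Suc k) a * (\<Prod>j\<le>n. w j ^ a j))"
  proof (rule sum.cong)
    fix a assume "a \<in> mons n (Suc k)"
    hence "(\<Sum>l\<le>n. real (a l)) = real (Suc k)" unfolding mons_def by (metis (mono_tags) mem_Collect_eq of_nat_sum)
    thus "(\<Sum>l\<le>n. real (a l)) / real (Suc k) * multinom n (Suc k) a * (\<Prod>j\<le>n. w j ^ a j) =
        multinom n (Suc k) a * (\<Prod>j\<le>n. w j ^ a j)" by simp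
  qed simp
  finally show ?case by simp
qed



lemma prod_if_remove:
  fixes x :: "nat \<Rightarrow> real"
  assumes "j \<le> n"
  shows "(\<Prod>l\<le>n. x l ^ (if l = j then a l - 1 else a l)) = x j ^ (a j - 1) * (\<Prod>l\<in>{..n}-{j}. x l ^ a l)"
proof -
  have "(\<Prod>l\<le>n. x l ^ (if l = j then a l - 1 else a l)) = x j ^ (a j - 1) * (\<Prod>l\<in>{..n}-{j}. x l ^ (if l = j then a l - 1 else a l))"
    using assms by (simp add: prod.remove)
  also have "(\<Prod>l\<in>{..n}-{j}. x l ^ (if l = j then a l - 1 else a l)) = (\<Prod>l\<in>{..n}-{j}. x l ^ a l)"
    by (rule prod.cong) auto
  finally show ?thesis .
qed

lemma mono_deriv:
  fixes x v :: "nat \<Rightarrow> real"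
  shows "((\<lambda>s. \<Prod>l\<le>n. (x l + s * v l) ^ a l) has_real_derivative
     (\<Sum>j\<le>n. real (a j) * (\<Prod>l\<le>n. x l ^ (if l = j then a l - 1 else a l)) * v j)) (at 0)"
proof -
  have d: "((\<lambda>s. (x l + s * v l) ^ a l) has_real_derivative real (a l) * (x l + 0 * v l) ^ (a l - 1) * v l) (at 0)" for l
    by (auto intro!: derivative_eq_intros)
  have "((\<lambda>s. \<Prod>l\<le>n. (x l + s * v l) ^ a l) has_real_derivative
     (\<Sum>j\<le>n. (real (a j) * (x j + 0 * v j) ^ (a j - 1) * v j) * (\<Prod>y\<in>{..n}-{j}. (x y + 0 * v y) ^ a y))) (at 0)"
    by (rule has_field_derivative_prod) (rule d)
  thus ?thesis
    by (rule DERIV_cong) (auto intro!: sum.cong simp: prod_if_remove)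
qed

lemma peval_deriv:
  fixes x v :: "nat \<Rightarrow> real"
  shows "((\<lambda>s. peval n k p (\<lambda>j. x j + s * v j)) has_real_derivative (\<Sum>j\<le>n. pderiv_at n k p j x * v j)) (at 0)"
proof -
  have "((\<lambda>s. peval n k p (\<lambda>j. x j + s * v j)) has_real_derivative
     (\<Sum>a\<in>mons n k. p a * (\<Sum>j\<le>n. real (a j) * (\<Prod>l\<le>n. x l ^ (if l = j then a l - 1 else a l)) * v j))) (at 0)"
    unfolding peval_def by (intro DERIV_sum DERIV_cmult mono_deriv)
  thus ?thesis
    by (rule DERIV_cong) (simp add: pderiv_at_def sum_distrib_left sum_distrib_right mult_ac sum.swap[of _ "mons n k"])
qed

definition Kc :: "nat \<Rightarrow> nat \<Rightarrow> (nat \<Rightarrow> real) \<Rightarrow> (nat \<Rightarrow> nat) \<Rightarrow> real" where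
  "Kc n k y a = (if a \<in> mons n k then multinom n k a * (\<Prod>j\<le>n. y j ^ a j) else 0)"

definition Jc :: "nat \<Rightarrow> nat \<Rightarrow> (nat \<Rightarrow> real) \<Rightarrow> (nat \<Rightarrow> real) \<Rightarrow> (nat \<Rightarrow> nat) \<Rightarrow> real" where
  "Jc n k x u a = (if a \<in> mons n k then multinom n k a / real k *
     (\<Sum>l\<le>n. real (a l) * (\<Prod>l'\<le>n. x l' ^ (if l' = l then a l' - 1 else a l')) * u l) else 0)"

lemma peval_q:
  fixes y z :: "nat \<Rightarrow> real"
  shows "peval n k (\<lambda>a. multinom n k a * (\<Prod>j\<le>n. z j ^ a j)) y = (\<Sum>j\<le>n. y j * z j) ^ k"
proof -
  have "peval n k (\<lambda>a. multinom n k a * (\<Prod>j\<le>n. z j ^ a j)) y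
     = (\<Sum>a\<in>mons n k. multinom n k a * (\<Prod>j\<le>n. (y j * z j) ^ a j))"
    unfolding peval_def by (simp add: power_mult_distrib prod.distrib mult_ac)
  also have "\<dots> = (\<Sum>j\<le>n. y j * z j) ^ k" by (rule multinomial)
  finally show ?thesis .
qed

lemma peval_Kc:
  fixes y z :: "nat \<Rightarrow> real"
  shows "peval n k (Kc n k y) z = (\<Sum>j\<le>n. z j * y j) ^ k"
proof -
  have "peval n k (Kc n k y) z = peval n k (\<lambda>a. multinom n k a * (\<Prod>j\<le>n. y j ^ a j)) z"
    unfolding peval_def Kc_def by (rule sum.cong) auto
  thus ?thesis by (simp add: peval_q)
qed

lemma peval_Jc:
  fixes x u z :: "nat \<Rightarrow> real"
  assumes k: "1 \<le> k"
  shows "peval n k (Jc n k x u) z = (\<Sum>j\<le>n. z j * x j) ^ (k - 1) * (\<Sum>j\<le>n. z j * u j)"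
proof -
  define q where "q = (\<lambda>a. multinom n k a * (\<Prod>j\<le>n. z j ^ a j))"
  define A where "A = (\<Sum>j\<le>n. x j * z j)"
  define B where "B = (\<Sum>j\<le>n. u j * z j)"
  have eq: "peval n k q (\<lambda>j. x j + s * u j) = (A + s * B) ^ k" for s
  proof -
    have "(\<Sum>j\<le>n. z j * (x j + s * u j)) = A + s * B"
      unfolding A_def B_def by (simp add: algebra_simps sum.distrib sum_distrib_left)
    thus ?thesis unfolding q_def peval_q by (simp add: mult_ac)
  qed
  have d1: "((\<lambda>s. peval n k q (\<lambda>j. x j + s * u j)) has_real_derivative (\<Sum>j\<le>n. pderiv_at n k q j x * u j)) (at 0)"
    by (rule peval_deriv)
  have d2: "((\<lambda>s. peval n k q (\<lambda>j. x j + s * u j)) has_real_derivative real k * A ^ (k - 1) * B) (at 0)"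
    unfolding eq by (auto intro!: derivative_eq_intros)
  have key: "(\<Sum>j\<le>n. pderiv_at n k q j x * u j) = real k * A ^ (k - 1) * B"
    using DERIV_unique[OF d1 d2] .
  have "peval n k (Jc n k x u) z = (\<Sum>j\<le>n. pderiv_at n k q j x * u j) / real k"
    unfolding peval_def Jc_def pderiv_at_def q_def
    by (simp add: sum_divide_distrib sum_distrib_left sum_distrib_right mult_ac sum.swap[of _ "mons n k"])
  also have "\<dots> = A ^ (k - 1) * B" using k by (simp add: key)
  finally show ?thesis by (simp add: A_def B_def mult_ac)
qed



definition wi :: "nat \<Rightarrow> nat \<Rightarrow> ((nat \<Rightarrow> nat) \<Rightarrow> real) \<Rightarrow> ((nat \<Rightarrow> nat) \<Rightarrow> real) \<Rightarrow> real" where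
  "wi n k p r = (\<Sum>a\<in>mons n k. p a * r a / multinom n k a)"

lemma weyl_inner_wi: "weyl_inner n d I P Q = (\<Sum>i\<in>I. wi n (d i) (P i) (Q i))"
  unfolding weyl_inner_def wi_def ..

lemma sphere_one: "x \<in> sphere_n n \<Longrightarrow> (\<Sum>j\<le>n. x j * x j) = 1"
  unfolding sphere_n_def by (simp add: power2_eq_square)

lemma tangent_orth: "u \<in> tangent n x \<Longrightarrow> (\<Sum>j\<le>n. u j * x j) = 0"
  unfolding tangent_def by simp

lemma K1: "x \<in> sphere_n n \<Longrightarrow> peval n k (Kc n k x) x = 1"
  by (simp add: peval_Kc sphere_one)

lemma shift_x:
  assumes "x \<in> sphere_n n" "v \<in> tangent n x"
  shows "(\<Sum>j\<le>n. (x j + s * v j) * x j) = 1"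
proof -
  have "(\<Sum>j\<le>n. (x j + s * v j) * x j) = (\<Sum>j\<le>n. x j * x j) + s * (\<Sum>j\<le>n. v j * x j)"
    by (simp add: algebra_simps sum.distrib sum_distrib_left)
  thus ?thesis using sphere_one[OF assms(1)] tangent_orth[OF assms(2)] by simp
qed

lemma shift_u:
  assumes "u \<in> tangent n x"
  shows "(\<Sum>j\<le>n. (x j + s * v j) * u j) = s * (\<Sum>j\<le>n. v j * u j)"
proof -
  have "(\<Sum>j\<le>n. (x j + s * v j) * u j) = (\<Sum>j\<le>n. u j * x j) + s * (\<Sum>j\<le>n. v j * u j)"
    by (simp add: algebra_simps sum.distrib sum_distrib_left)
  thus ?thesis using tangent_orth[OF assms(1)] by simp
qed

lemma K2:
  assumes "x \<in> sphere_n n" "v \<in> tangent n x"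
  shows "(\<Sum>j\<le>n. pderiv_at n k (Kc n k x) j x * v j) = 0"
proof -
  have eq: "peval n k (Kc n k x) (\<lambda>j. x j + s * v j) = 1" for s
    using shift_x[OF assms, of s] by (simp add: peval_Kc)
  have "((\<lambda>s. peval n k (Kc n k x) (\<lambda>j. x j + s * v j)) has_real_derivative 0) (at 0)"
    unfolding eq by simp
  from DERIV_unique[OF peval_deriv this] show ?thesis .
qed

lemma J1:
  assumes "1 \<le> k" "x \<in> sphere_n n" "u \<in> tangent n x"
  shows "peval n k (Jc n k x u) x = 0"
  using tangent_orth[OF assms(3)] by (simp add: peval_Jc[OF assms(1)] mult.commute)

lemma J2:
  assumes "1 \<le> k" "x \<in> sphere_n n" "u \<in> tangent n x" "v \<in> tangent n x"
  shows "(\<Sum>j\<le>n. pderiv_at n k (Jc n k x u) j x * v j) = (\<Sum>j\<le>n. v j * u j)"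
proof -
  have eq: "peval n k (Jc n k x u) (\<lambda>j. x j + s * v j) = s * (\<Sum>j\<le>n. v j * u j)" for s
    using shift_x[OF assms(2,4), of s] shift_u[OF assms(3), of s v]
    by (simp add: peval_Jc[OF assms(1)])
  have "((\<lambda>s. peval n k (Jc n k x u) (\<lambda>j. x j + s * v j)) has_real_derivative (\<Sum>j\<le>n. v j * u j)) (at 0)"
    unfolding eq by (auto intro!: derivative_eq_intros)
  from DERIV_unique[OF peval_deriv this] show ?thesis .
qed

lemma R1: "wi n k p (Kc n k y) = peval n k p y"
  unfolding wi_def peval_def Kc_def
  by (rule sum.cong) (auto simp: multinom_pos[THEN less_imp_neq, symmetric])

lemma R2: "wi n k p (Jc n k x u) = (\<Sum>j\<le>n. pderiv_at n k p j x * u j) / real k"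
proof -
  have "wi n k p (Jc n k x u) = (\<Sum>a\<in>mons n k. p a / real k *
     (\<Sum>l\<le>n. real (a l) * (\<Prod>l'\<le>n. x l' ^ (if l' = l then a l' - 1 else a l')) * u l))"
    unfolding wi_def Jc_def
    by (rule sum.cong) (auto simp: multinom_pos[THEN less_imp_neq, symmetric])
  also have "\<dots> = (\<Sum>j\<le>n. pderiv_at n k p j x * u j) / real k"
    unfolding pderiv_at_def
    by (simp add: sum_divide_distrib sum_distrib_left sum_distrib_right mult_ac sum.swap[of _ "mons n k"])
  finally show ?thesis .
qed

lemma wi_sym: "wi n k p r = wi n k r p"
  unfolding wi_def by (simp add: mult.commute)

lemma wi_nonneg: "wi n k p p \<ge> 0"
  unfolding wi_def by (auto intro!: sum_nonneg divide_nonneg_pos multinom_pos)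

lemma wi_comb: "wi n k (\<lambda>a. c1 * f a + c2 * g a) (\<lambda>a. c1 * f a + c2 * g a)
   = c1^2 * wi n k f f + 2 * c1 * c2 * wi n k f g + c2^2 * wi n k g g"
  unfolding wi_def
  by (simp add: sum_distrib_left sum.distrib[symmetric] power2_eq_square algebra_simps add_divide_distrib)

lemma KK: "x \<in> sphere_n n \<Longrightarrow> wi n k (Kc n k x) (Kc n k x) = 1"
  by (simp add: R1 K1)

lemma KJ: "1 \<le> k \<Longrightarrow> x \<in> sphere_n n \<Longrightarrow> u \<in> tangent n x \<Longrightarrow> wi n k (Kc n k x) (Jc n k x u) = 0"
  by (simp add: wi_sym[of n k "Kc n k x"] R1 J1)

lemma JJ: "1 \<le> k \<Longrightarrow> x \<in> sphere_n n \<Longrightarrow> u \<in> tangent n x \<Longrightarrow>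
   wi n k (Jc n k x u) (Jc n k x u) = (\<Sum>j\<le>n. u j * u j) / real k"
  by (simp add: R2 J2)



definition ip :: "nat \<Rightarrow> (nat \<Rightarrow> real) \<Rightarrow> (nat \<Rightarrow> real) \<Rightarrow> real" where
  "ip n u v = (\<Sum>l\<le>n. u l * v l)"

lemma ip_sym: "ip n u v = ip n v u" unfolding ip_def by (simp add: mult.commute)
lemma ip_diff: "ip n (\<lambda>l. f l - g l) w = ip n f w - ip n g w"
  unfolding ip_def by (simp add: algebra_simps sum_subtractf)
lemma ip_add: "ip n (\<lambda>l. f l + g l) w = ip n f w + ip n g w"
  unfolding ip_def by (simp add: algebra_simps sum.distrib)
lemma ip_scale: "ip n (\<lambda>l. c * f l) w = c * ip n f w"
  unfolding ip_def by (simp add: algebra_simps sum_distrib_left)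
lemma ip_sum: "ip n (\<lambda>l. \<Sum>i\<in>J. z i * h i l) w = (\<Sum>i\<in>J. z i * ip n (h i) w)"
  unfolding ip_def by (simp add: sum_distrib_right sum_distrib_left mult_ac sum.swap[of _ J])

lemma ip_self_zero: "ip n f f = 0 \<Longrightarrow> l \<le> n \<Longrightarrow> f l = 0"
  unfolding ip_def by (subst (asm) sum_nonneg_eq_0_iff) auto

lemma proj_exists:
  fixes h :: "'b \<Rightarrow> nat \<Rightarrow> real"
  assumes "finite J"
  shows "\<exists>z. \<forall>j\<in>J. ip n (\<lambda>l. u l - (\<Sum>i\<in>J. z i * h i l)) (h j) = 0"
  using assms
proof (induction J arbitrary: u rule: finite_induct)
  case empty thus ?case by simp
next
  case (insert b J)
  obtain zu where zu: "\<forall>j\<in>J. ip n (\<lambda>l. u l - (\<Sum>i\<in>J. zu i * h i l)) (h j) = 0"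
    using insert.IH by blast
  obtain zg where zg: "\<forall>j\<in>J. ip n (\<lambda>l. h b l - (\<Sum>i\<in>J. zg i * h i l)) (h j) = 0"
    using insert.IH by blast
  define r where "r = (\<lambda>l. u l - (\<Sum>i\<in>J. zu i * h i l))"
  define h' where "h' = (\<lambda>l. h b l - (\<Sum>i\<in>J. zg i * h i l))"
  have r: "\<forall>j\<in>J. ip n r (h j) = 0" using zu r_def by simp
  have h': "\<forall>j\<in>J. ip n h' (h j) = 0" using zg h'_def by simp
  have hb: "h b = (\<lambda>l. h' l + (\<Sum>i\<in>J. zg i * h i l))" by (simp add: h'_def)
  have ip_hb: "ip n f (h b) = ip n f h' + (\<Sum>i\<in>J. zg i * ip n f (h i))" for f
    by (subst hb, subst ip_sym, simp add: ip_add ip_sum ip_sym)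
  show ?case
  proof (cases "ip n h' h' = 0")
    case True
    define z where "z = zu(b := 0)"
    have res: "(\<lambda>l. u l - (\<Sum>i\<in>insert b J. z i * h i l)) = r"
    proof
      fix l
      have "(\<Sum>i\<in>J. z i * h i l) = (\<Sum>i\<in>J. zu i * h i l)"
        by (rule sum.cong) (use insert.hyps in \<open>auto simp: z_def\<close>)
      thus "u l - (\<Sum>i\<in>insert b J. z i * h i l) = r l"
        using insert.hyps by (simp add: z_def r_def)
    qed
    have "ip n r h' = 0" unfolding ip_def using ip_self_zero[OF True] by simp
    hence "ip n r (h b) = 0" using r by (simp add: ip_hb)
    thus ?thesis using r res by (intro exI[of _ z]) auto
  next
    case False
    define c where "c = ip n r h' / ip n h' h'"
    define z where "z = (\<lambda>i. if i = b then c else zu i - c * zg i)"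
    have res: "(\<lambda>l. u l - (\<Sum>i\<in>insert b J. z i * h i l)) = (\<lambda>l. r l - c * h' l)"
    proof
      fix l
      have "(\<Sum>i\<in>J. z i * h i l) = (\<Sum>i\<in>J. (zu i - c * zg i) * h i l)"
        by (rule sum.cong) (use insert.hyps in \<open>auto simp: z_def\<close>)
      also have "\<dots> = (\<Sum>i\<in>J. zu i * h i l) - c * (\<Sum>i\<in>J. zg i * h i l)"
        by (simp add: algebra_simps sum_subtractf sum_distrib_left)
      finally have "(\<Sum>i\<in>J. z i * h i l) = (\<Sum>i\<in>J. zu i * h i l) - c * (\<Sum>i\<in>J. zg i * h i l)" .
      thus "u l - (\<Sum>i\<in>insert b J. z i * h i l) = r l - c * h' l"
        using insert.hyps by (simp add: z_def r_def h'_def algebra_simps)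
    qed
    have o1: "\<forall>j\<in>J. ip n (\<lambda>l. r l - c * h' l) (h j) = 0"
      using r h' by (simp add: ip_diff ip_scale)
    have "ip n (\<lambda>l. r l - c * h' l) h' = ip n r h' - c * ip n h' h'"
      by (simp add: ip_diff ip_scale)
    hence "ip n (\<lambda>l. r l - c * h' l) h' = 0"
      using False by (simp add: c_def)
    hence "ip n (\<lambda>l. r l - c * h' l) (h b) = 0" using o1 by (simp add: ip_hb)
    thus ?thesis using o1 res by (intro exI[of _ z]) auto
  qed
qed

definition grad :: "nat \<Rightarrow> (nat \<Rightarrow> nat) \<Rightarrow> (nat \<Rightarrow> (nat \<Rightarrow> nat) \<Rightarrow> real) \<Rightarrow> (nat \<Rightarrow> real) \<Rightarrow> nat \<Rightarrow> nat \<Rightarrow> real" where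
  "grad n d P x i j = pderiv_at n (d i) (P i) j x"

lemma DF_ip: "DF n d P x v i = ip n (grad n d P x i) v"
  unfolding DF_def ip_def grad_def ..

lemma grad_zero: "n < j \<Longrightarrow> grad n d P x i j = 0"
  unfolding grad_def pderiv_at_def by (auto intro!: sum.neutral simp: mons_zero)

lemma tangent_ip: "u \<in> tangent n x \<longleftrightarrow> (\<forall>i. n < i \<longrightarrow> u i = 0) \<and> ip n u x = 0"
  unfolding tangent_def ip_def by simp

lemma pinv_props:
  assumes surj: "surj_on_T n d I P x" and fin: "finite I" and x: "x \<in> sphere_n n"
  shows "pinv n d I P x W \<in> tangent n x \<and> (\<forall>i\<in>I. DF n d P x (pinv n d I P x W) i = W i) \<and>
      (\<forall>v\<in>tangent n x. (\<forall>i\<in>I. DF n d P x v i = 0) \<longrightarrow> (\<Sum>j\<le>n. pinv n d I P x W j * v j) = 0)"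
proof -
  let ?Q = "\<lambda>u. u \<in> tangent n x \<and> (\<forall>i\<in>I. DF n d P x u i = W i) \<and>
      (\<forall>v\<in>tangent n x. (\<forall>i\<in>I. DF n d P x v i = 0) \<longrightarrow> (\<Sum>j\<le>n. u j * v j) = 0)"
  have ex: "\<exists>u. ?Q u"
  proof -
    obtain u0 where u0: "u0 \<in> tangent n x" "\<forall>i\<in>I. DF n d P x u0 i = W i"
      using surj unfolding surj_on_T_def by blast
    define h where "h = (\<lambda>j::nat option. case j of None \<Rightarrow> x | Some i \<Rightarrow> grad n d P x i)"
    define J where "J = insert None (Some ` I)"
    have finJ: "finite J" using fin by (simp add: J_def)
    obtain z where z: "\<forall>j\<in>J. ip n (\<lambda>l. u0 l - (\<Sum>i\<in>J. z i * h i l)) (h j) = 0"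
      using proj_exists[OF finJ] by blast
    define w where "w = (\<lambda>l. \<Sum>i\<in>J. z i * h i l)"
    have hz: "n < l \<Longrightarrow> h j l = 0" for j l
      using x grad_zero by (cases j) (auto simp: h_def sphere_n_def)
    have ipw: "ip n w f = ip n u0 f" if "f = h j" "j \<in> J" for f j
      using z that ip_diff[of n u0 w f] unfolding w_def by (simp add: ip_sym)
    have "ip n w x = 0"
      using ipw[of x None] u0(1) by (simp add: J_def h_def tangent_ip ip_sym)
    hence wT: "w \<in> tangent n x" unfolding tangent_ip w_def using hz by simp
    have wD: "\<forall>i\<in>I. DF n d P x w i = W i"
    proof
      fix i assume i: "i \<in> I"
      have "ip n w (grad n d P x i) = ip n u0 (grad n d P x i)"
        by (rule ipw[of _ "Some i"]) (use i in \<open>auto simp: h_def J_def\<close>)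
      thus "DF n d P x w i = W i" using u0(2) i by (simp add: DF_ip ip_sym)
    qed
    have wO: "(\<Sum>j\<le>n. w j * v j) = 0" if v: "v \<in> tangent n x" "\<forall>i\<in>I. DF n d P x v i = 0" for v
    proof -
      have "\<forall>j\<in>J. ip n (h j) v = 0"
        using v by (auto simp: J_def h_def DF_ip tangent_ip ip_sym)
      hence "ip n w v = 0" unfolding w_def ip_sum by simp
      thus ?thesis by (simp add: ip_def)
    qed
    show ?thesis using wT wD wO by blast
  qed
  have uniq: "u1 = u2" if "?Q u1" "?Q u2" for u1 u2
  proof -
    define e where "e = (\<lambda>l. u1 l - u2 l)"
    have eT: "e \<in> tangent n x" using that by (auto simp: tangent_ip e_def ip_diff)
    have eD: "\<forall>i\<in>I. DF n d P x e i = 0" using that by (auto simp: DF_ip e_def ip_sym ip_diff)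
    have "ip n u1 e = 0" "ip n u2 e = 0" using that eT eD by (auto simp: ip_def)
    hence "ip n e e = 0" by (simp add: e_def ip_diff)
    hence "e l = 0" for l using ip_self_zero[of n e l] eT by (cases "l \<le> n") (auto simp: tangent_ip)
    thus ?thesis by (auto simp: e_def fun_eq_iff)
  qed
  from ex obtain ua where ua: "?Q ua" by blast
  have "?Q (THE u. ?Q u)" by (rule theI[of ?Q ua]) (use ua uniq in blast)+
  thus ?thesis unfolding pinv_def .
qed



lemma pert_peval:
  assumes "1 \<le> k" "x \<in> sphere_n n" "u \<in> tangent n x"
  shows "peval n k (\<lambda>a. p a - (f * Kc n k x a + c * Jc n k x u a)) x = peval n k p x - f"
proof -
  have "peval n k (\<lambda>a. p a - (f * Kc n k x a + c * Jc n k x u a)) x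
     = peval n k p x - f * peval n k (Kc n k x) x - c * peval n k (Jc n k x u) x"
    unfolding peval_def by (simp add: algebra_simps sum_subtractf sum.distrib sum_distrib_left)
  thus ?thesis using K1[OF assms(2)] J1[OF assms] by simp
qed

lemma pert_pderiv:
  assumes "1 \<le> k" "x \<in> sphere_n n" "u \<in> tangent n x" "v \<in> tangent n x"
  shows "(\<Sum>j\<le>n. pderiv_at n k (\<lambda>a. p a - (f * Kc n k x a + c * Jc n k x u a)) j x * v j)
     = (\<Sum>j\<le>n. pderiv_at n k p j x * v j) - c * (\<Sum>j\<le>n. v j * u j)"
proof -
  have "(\<Sum>j\<le>n. pderiv_at n k (\<lambda>a. p a - (f * Kc n k x a + c * Jc n k x u a)) j x * v j)
     = (\<Sum>j\<le>n. pderiv_at n k p j x * v j) - f * (\<Sum>j\<le>n. pderiv_at n k (Kc n k x) j x * v j)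
        - c * (\<Sum>j\<le>n. pderiv_at n k (Jc n k x u) j x * v j)"
    unfolding pderiv_at_def by (simp add: algebra_simps sum_subtractf sum.distrib sum_distrib_left)
  thus ?thesis using K2[OF assms(2,4)] J2[OF assms] by simp
qed

lemma weyl_norm_nonneg: "weyl_norm n d I P \<ge> 0"
  unfolding weyl_norm_def weyl_inner_wi by (auto intro!: sum_nonneg wi_nonneg)

lemma e0_sphere: "(\<lambda>j. if j = 0 then 1 else 0) \<in> sphere_n n"
proof -
  have "(\<Sum>j\<le>n. ((if j = 0 then 1 else 0)::real)\<^sup>2) = (\<Sum>j\<le>n. if j = 0 then 1 else 0)"
    by (rule sum.cong) auto
  thus ?thesis unfolding sphere_n_def by simp
qed

lemma Sigma_of_kappa_at:
  assumes "G \<in> Hd n d (q+s)" "L \<subseteq> {q..<q+s}" "q + card L \<le> n + 1" "x \<in> sphere_n n"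
    "kappa_at n d ({..<q} \<union> L) G x = \<infinity>"
  shows "G \<in> Sigma_star n d q s"
proof -
  have "kappa_at n d ({..<q} \<union> L) G x \<le> kappa n d ({..<q} \<union> L) G"
    unfolding kappa_def using assms(4) by (rule SUP_upper)
  also have "\<dots> \<le> kappa_star n d q s G"
    unfolding kappa_star_def using assms(2,3) by (intro SUP_upper) auto
  finally show ?thesis using assms(1,5) by (simp add: Sigma_star_def)
qed

lemma kappa_inf:
  assumes "\<forall>i\<in>I. peval n (d i) (G i) x = 0" "\<not> surj_on_T n d I G x"
  shows "kappa_at n d I G x = \<infinity>"
  using assms unfolding kappa_at_def mu_proj_def Let_def by simp

lemma zero_Sigma:
  assumes "q \<le> n + 1"
  shows "(\<lambda>i a. 0) \<in> Sigma_star n d q s"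
proof (rule Sigma_of_kappa_at[where L="{}" and x="\<lambda>j. if j = 0 then 1 else 0"])
  show "(\<lambda>i a. 0) \<in> Hd n d (q + s)" by (simp add: Hd_def)
  show "kappa_at n d ({..<q} \<union> {}) (\<lambda>i a. 0) (\<lambda>j. if j = 0 then 1 else 0) = \<infinity>"
    by (simp add: kappa_at_def weyl_norm_def weyl_inner_def)
qed (use assms e0_sphere in auto)

lemma dist_nonneg:
  assumes "q \<le> n + 1"
  shows "0 \<le> dist_Sigma_star n d q s P"
  unfolding dist_Sigma_star_def
  by (rule cInf_greatest) (use zero_Sigma[OF assms, of d s] weyl_norm_nonneg in auto)

lemma dist_le:
  assumes "G \<in> Sigma_star n d q s"
  shows "dist_Sigma_star n d q s P \<le> weyl_norm n d {..<q+s} (\<lambda>i a. P i a - G i a)"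
  unfolding dist_Sigma_star_def
  by (rule cInf_lower) (use assms weyl_norm_nonneg in \<open>auto intro!: bdd_belowI[of _ 0]\<close>)

lemma pert:
  assumes PH: "P \<in> Hd n d (q+s)" and dpos: "\<forall>i<q+s. 1 \<le> d i"
    and L: "L \<subseteq> {q..<q+s}" "q + card L \<le> n + 1"
    and x: "x \<in> sphere_n n" and u: "u \<in> tangent n x"
    and G_def: "G = (\<lambda>i a. if i \<in> {..<q} \<union> L then P i a -
        (peval n (d i) (P i) x * Kc n (d i) x a + c i * Jc n (d i) x u a) else P i a)"
    and ns: "\<not> surj_on_T n d ({..<q} \<union> L) G x"
  shows "G \<in> Sigma_star n d q s \<and> dist_Sigma_star n d q s P \<le>
     sqrt (\<Sum>i\<in>{..<q} \<union> L. (peval n (d i) (P i) x)\<^sup>2 + (c i)\<^sup>2 * ip n u u / real (d i))"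
proof -
  let ?I = "{..<q} \<union> L"
  have IS: "?I \<subseteq> {..<q+s}" using L by auto
  have finI: "finite ?I" using L(1) finite_subset by blast
  have dI: "1 \<le> d i" if "i \<in> ?I" for i using IS that dpos by auto
  have GH: "G \<in> Hd n d (q+s)"
    using PH IS unfolding Hd_def G_def Kc_def Jc_def by auto
  have ev: "\<forall>i\<in>?I. peval n (d i) (G i) x = 0"
    using pert_peval[OF dI x u] by (simp add: G_def)
  have GS: "G \<in> Sigma_star n d q s"
    by (rule Sigma_of_kappa_at[OF GH L x kappa_inf[OF ev ns]])
  define D where "D = (\<lambda>i a. if i \<in> ?I then peval n (d i) (P i) x * Kc n (d i) x a + c i * Jc n (d i) x u a else 0)"
  have PG: "(\<lambda>i a. P i a - G i a) = D" by (auto simp: fun_eq_iff G_def D_def)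
  have "weyl_inner n d {..<q+s} D D = (\<Sum>i\<in>{..<q+s}. wi n (d i) (D i) (D i))"
    by (rule weyl_inner_wi)
  also have "\<dots> = (\<Sum>i\<in>?I. wi n (d i) (D i) (D i))"
    by (rule sum.mono_neutral_right) (use IS in \<open>auto simp: D_def wi_def\<close>)
  also have "\<dots> = (\<Sum>i\<in>?I. (peval n (d i) (P i) x)\<^sup>2 + (c i)\<^sup>2 * ip n u u / real (d i))"
  proof (rule sum.cong)
    fix i assume i: "i \<in> ?I"
    have "wi n (d i) (D i) (D i) = wi n (d i) (\<lambda>a. peval n (d i) (P i) x * Kc n (d i) x a + c i * Jc n (d i) x u a)
         (\<lambda>a. peval n (d i) (P i) x * Kc n (d i) x a + c i * Jc n (d i) x u a)"
      using i by (simp add: D_def)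
    also have "\<dots> = (peval n (d i) (P i) x)\<^sup>2 + (c i)\<^sup>2 * ip n u u / real (d i)"
      unfolding wi_comb using KK[OF x] KJ[OF dI[OF i] x u] JJ[OF dI[OF i] x u] by (simp add: ip_def)
    finally show "wi n (d i) (D i) (D i) = (peval n (d i) (P i) x)\<^sup>2 + (c i)\<^sup>2 * ip n u u / real (d i)" .
  qed simp
  finally have X: "weyl_inner n d {..<q+s} D D = (\<Sum>i\<in>?I. (peval n (d i) (P i) x)\<^sup>2 + (c i)\<^sup>2 * ip n u u / real (d i))" .
  have "weyl_norm n d {..<q+s} (\<lambda>i a. P i a - G i a) =
      sqrt (\<Sum>i\<in>?I. (peval n (d i) (P i) x)\<^sup>2 + (c i)\<^sup>2 * ip n u u / real (d i))"
    unfolding weyl_norm_def PG X ..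
  thus ?thesis using GS dist_le[OF GS, of P] by simp
qed



lemma tangent_comb: "u \<in> tangent n x \<Longrightarrow> v \<in> tangent n x \<Longrightarrow> (\<lambda>l. v l - c * u l) \<in> tangent n x"
  unfolding tangent_ip by (simp add: ip_diff ip_scale)

lemma local_bound:
  assumes q: "q \<le> n + 1" and dpos: "\<forall>i<q+s. 1 \<le> d i" and PH: "P \<in> Hd n d (q+s)"
    and L: "L \<subseteq> {q..<q+s}" "q + card L \<le> n + 1"
    and x: "x \<in> sphere_n n" and dp: "dist_Sigma_star n d q s P > 0"
  shows "kappa_at n d ({..<q} \<union> L) P x \<le> ereal (weyl_norm n d ({..<q} \<union> L) P / dist_Sigma_star n d q s P)"
proof -
  define I where "I = {..<q} \<union> L"
  define N where "N = weyl_norm n d I P"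
  define S where "S = (\<Sum>i\<in>I. (peval n (d i) (P i) x)\<^sup>2)"
  define \<delta> where "\<delta> = dist_Sigma_star n d q s P"
  have IS: "I \<subseteq> {..<q+s}" using L by (auto simp: I_def)
  have finI: "finite I" using IS finite_subset by blast
  have dI: "1 \<le> d i" if "i \<in> I" for i using IS that dpos by auto
  have \<delta>pos: "\<delta> > 0" using dp by (simp add: \<delta>_def)
  have Spos: "S \<ge> 0" unfolding S_def by (auto intro!: sum_nonneg)
  have Npos: "N \<ge> 0" unfolding N_def by (rule weyl_norm_nonneg)
  have notinf: "kappa_at n d I P x \<noteq> \<infinity>"
  proof
    assume "kappa_at n d I P x = \<infinity>"
    hence "P \<in> Sigma_star n d q s" using Sigma_of_kappa_at[OF PH L x] by (simp add: I_def)
    from dist_le[OF this, of P] have "\<delta> \<le> 0"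
      by (simp add: \<delta>_def weyl_norm_def weyl_inner_def)
    thus False using \<delta>pos by simp
  qed
  have N0: "N \<noteq> 0" using notinf by (auto simp: kappa_at_def N_def)
  hence Np: "N > 0" using Npos by simp
  have zT: "(\<lambda>_. 0) \<in> tangent n x" by (simp add: tangent_def)
  have pertI: "\<delta> \<le> sqrt (\<Sum>i\<in>I. (peval n (d i) (P i) x)\<^sup>2 + (c i)\<^sup>2 * ip n u u / real (d i))"
    if u: "u \<in> tangent n x" and ns: "\<not> surj_on_T n d I (\<lambda>i a. if i \<in> I then P i a -
        (peval n (d i) (P i) x * Kc n (d i) x a + c i * Jc n (d i) x u a) else P i a) x" for c u
    using pert[OF PH dpos L x u refl, of c] ns by (simp add: I_def \<delta>_def)
  have DFG: "DF n d (\<lambda>i a. if i \<in> I then P i a -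
        (peval n (d i) (P i) x * Kc n (d i) x a + c i * Jc n (d i) x u a) else P i a) x v i
      = DF n d P x v i - c i * (\<Sum>j\<le>n. v j * u j)"
    if "i \<in> I" "u \<in> tangent n x" "v \<in> tangent n x" for i c u v
    using that pert_pderiv[OF dI[OF that(1)] x that(2,3)] by (simp add: DF_def)
  show ?thesis
  proof (cases "surj_on_T n d I P x")
    case False
    have ns: "\<not> surj_on_T n d I (\<lambda>i a. if i \<in> I then P i a -
        (peval n (d i) (P i) x * Kc n (d i) x a + (\<lambda>_. 0) i * Jc n (d i) x (\<lambda>_. 0) a) else P i a) x"
    proof
      assume a: "surj_on_T n d I (\<lambda>i a. if i \<in> I then P i a -
        (peval n (d i) (P i) x * Kc n (d i) x a + (\<lambda>_. 0) i * Jc n (d i) x (\<lambda>_. 0) a) else P i a) x"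
      have "surj_on_T n d I P x" unfolding surj_on_T_def
      proof
        fix w'
        obtain v where v: "v \<in> tangent n x" and vD: "\<forall>i\<in>I. DF n d (\<lambda>i a. if i \<in> I then P i a -
          (peval n (d i) (P i) x * Kc n (d i) x a + (\<lambda>_. 0) i * Jc n (d i) x (\<lambda>_. 0) a) else P i a) x v i = w' i"
          using a unfolding surj_on_T_def by blast
        have "\<forall>i\<in>I. DF n d P x v i = w' i" using vD DFG[OF _ zT v, of _ "\<lambda>_. 0"] by simp
        thus "\<exists>u\<in>tangent n x. \<forall>i\<in>I. DF n d P x u i = w' i" using v by blast
      qed
      thus False using False by simp
    qed
    have dS: "\<delta> \<le> sqrt S" using pertI[OF zT ns] by (simp add: S_def)
    have S0: "S \<noteq> 0"
    proof
      assume "S = 0"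
      hence "\<delta> \<le> 0" using dS by simp
      thus False using \<delta>pos by simp
    qed
    have kap: "kappa_at n d I P x = ereal (1 / sqrt (S / N\<^sup>2))"
      using False N0 S0 Np unfolding kappa_at_def mu_proj_def Let_def
      by (simp add: N_def[symmetric] S_def[symmetric])
    have "1 / sqrt (S / N\<^sup>2) = N / sqrt S" using Np by (simp add: real_sqrt_divide)
    also have "\<dots> \<le> N / \<delta>" using dS \<delta>pos Np S0 Spos by (auto intro!: divide_left_mono mult_pos_pos)
    finally show ?thesis using kap by (simp add: I_def N_def \<delta>_def)
  next
    case surj: True
    define M where "M = pinv_Delta_norm n d I P x"
    define E where "E = {sqrt (\<Sum>j\<le>n. (pinv n d I P x (\<lambda>i. sqrt (real (d i)) * w i) j)\<^sup>2) | w. (\<Sum>i\<in>I. (w i)\<^sup>2) \<le> 1}"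
    have ME: "M = Sup E" unfolding M_def E_def pinv_Delta_norm_def ..
    have Ene: "E \<noteq> {}" unfolding E_def by (auto intro!: exI[of _ "\<lambda>_. 0"])
    have elem: "\<delta>\<^sup>2 \<le> S + 1 / ip n u u"
      if w: "(\<Sum>i\<in>I. (w i)\<^sup>2) \<le> 1" and uu: "u = pinv n d I P x (\<lambda>i. sqrt (real (d i)) * w i)"
        and m2: "ip n u u > 0" for w u
    proof -
      define W where "W = (\<lambda>i. sqrt (real (d i)) * w i)"
      define m where "m = ip n u u"
      define c where "c = (\<lambda>i. W i / m)"
      have pp: "u \<in> tangent n x" "\<forall>i\<in>I. DF n d P x u i = W i"
        "\<forall>v\<in>tangent n x. (\<forall>i\<in>I. DF n d P x v i = 0) \<longrightarrow> (\<Sum>j\<le>n. u j * v j) = 0"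
        using pinv_props[OF surj finI x, of W] uu by (simp_all add: W_def)
      have mp: "m > 0" using m2 by (simp add: m_def)
      have ns: "\<not> surj_on_T n d I (\<lambda>i a. if i \<in> I then P i a -
        (peval n (d i) (P i) x * Kc n (d i) x a + c i * Jc n (d i) x u a) else P i a) x"
      proof
        assume "surj_on_T n d I (\<lambda>i a. if i \<in> I then P i a -
          (peval n (d i) (P i) x * Kc n (d i) x a + c i * Jc n (d i) x u a) else P i a) x"
        then obtain v where v: "v \<in> tangent n x" and
          vD: "\<forall>i\<in>I. DF n d (\<lambda>i a. if i \<in> I then P i a -
          (peval n (d i) (P i) x * Kc n (d i) x a + c i * Jc n (d i) x u a) else P i a) x v i = W i"
          unfolding surj_on_T_def by blast
        define lam where "lam = 1 + ip n v u / m"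
        have vP: "DF n d P x v i = lam * W i" if i: "i \<in> I" for i
          using vD DFG[OF i pp(1) v, of c] i mp
          by (simp add: lam_def c_def ip_def field_simps)
        define k where "k = (\<lambda>l. v l - lam * u l)"
        have kT: "k \<in> tangent n x" unfolding k_def by (rule tangent_comb[OF pp(1) v])
        have kD: "\<forall>i\<in>I. DF n d P x k i = 0"
          using vP pp(2) by (simp add: k_def DF_ip ip_sym[of n _ "(\<lambda>l. v l - lam * u l)"] ip_diff ip_scale ip_sym)
        have "(\<Sum>j\<le>n. u j * k j) = 0" using pp(3) kT kD by blast
        hence "ip n u k = 0" by (simp add: ip_def)
        moreover have "ip n k u = ip n v u - lam * m" unfolding k_def m_def by (simp add: ip_diff ip_scale)
        ultimately have "ip n v u - lam * m = 0" using ip_sym[of n u k] by simp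
        thus False using mp by (simp add: lam_def field_simps)
      qed
      have d1: "\<delta> \<le> sqrt (\<Sum>i\<in>I. (peval n (d i) (P i) x)\<^sup>2 + (c i)\<^sup>2 * ip n u u / real (d i))"
        by (rule pertI[OF pp(1) ns])
      have "(\<Sum>i\<in>I. (peval n (d i) (P i) x)\<^sup>2 + (c i)\<^sup>2 * ip n u u / real (d i))
          = S + (\<Sum>i\<in>I. (w i)\<^sup>2) / m"
      proof -
        have "(c i)\<^sup>2 * ip n u u / real (d i) = (w i)\<^sup>2 / m" if "i \<in> I" for i
        proof -
          have "real (d i) > 0" using dI[OF that] by simp
          thus ?thesis using mp
            by (simp add: c_def W_def m_def power_mult_distrib power_divide field_simps power2_eq_square)
        qed
        thus ?thesis by (simp add: S_def sum.distrib sum_divide_distrib)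
      qed
      also have "\<dots> \<le> S + 1 / m" using w mp by (simp add: divide_right_mono)
      finally have "\<delta> \<le> sqrt (S + 1 / m)" using d1 by (meson order.trans real_sqrt_le_mono)
      hence "\<delta>\<^sup>2 \<le> (sqrt (S + 1 / m))\<^sup>2" using \<delta>pos by (intro power_mono) auto
      also have "\<dots> = S + 1 / m" using Spos mp by simp
      finally show ?thesis by (simp add: m_def)
    qed
    show ?thesis
    proof (cases "N * M = 0")
      case True
      have "kappa_at n d I P x = 0"
        using surj True N0 unfolding kappa_at_def mu_proj_def Let_def
        by (simp add: N_def[symmetric] M_def[symmetric] zero_ereal_def)
      thus ?thesis using Np \<delta>pos by (simp add: I_def N_def \<delta>_def)
    next
      case False
      hence M0: "M \<noteq> 0" by simp
      have R: "\<delta>\<^sup>2 \<le> 1 / M\<^sup>2 + S"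
      proof (cases "\<delta>\<^sup>2 \<le> S")
        case True thus ?thesis by (simp add: add_increasing)
      next
        case False
        define B where "B = 1 / sqrt (\<delta>\<^sup>2 - S)"
        have gap: "\<delta>\<^sup>2 - S > 0" using False by simp
        have bnd: "e \<le> B" if eE: "e \<in> E" for e
        proof -
          obtain w where w: "(\<Sum>i\<in>I. (w i)\<^sup>2) \<le> 1"
            and e: "e = sqrt (\<Sum>j\<le>n. (pinv n d I P x (\<lambda>i. sqrt (real (d i)) * w i) j)\<^sup>2)"
            using eE unfolding E_def by blast
          define u where "u = pinv n d I P x (\<lambda>i. sqrt (real (d i)) * w i)"
          have eu: "e = sqrt (ip n u u)" by (simp add: e u_def ip_def power2_eq_square)
          have ge: "ip n u u \<ge> 0" unfolding ip_def by (auto intro!: sum_nonneg)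
          show ?thesis
          proof (cases "ip n u u = 0")
            case True thus ?thesis using eu gap by (simp add: B_def)
          next
            case False
            hence mp: "ip n u u > 0" using ge by simp
            have "\<delta>\<^sup>2 \<le> S + 1 / ip n u u" by (rule elem[OF w u_def mp])
            hence "\<delta>\<^sup>2 - S \<le> 1 / ip n u u" by simp
            hence "ip n u u \<le> 1 / (\<delta>\<^sup>2 - S)" using mp gap by (simp add: field_simps)
            hence "sqrt (ip n u u) \<le> sqrt (1 / (\<delta>\<^sup>2 - S))" by (rule real_sqrt_le_mono)
            thus ?thesis using eu by (simp add: B_def real_sqrt_divide)
          qed
        qed
        have MB: "M \<le> B" unfolding ME by (rule cSup_least[OF Ene bnd])
        have e0: "sqrt (\<Sum>j\<le>n. (pinv n d I P x (\<lambda>i. sqrt (real (d i)) * 0) j)\<^sup>2) \<in> E"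
          unfolding E_def by (auto intro!: exI[of _ "\<lambda>_. 0"])
        have "sqrt (\<Sum>j\<le>n. (pinv n d I P x (\<lambda>i. sqrt (real (d i)) * 0) j)\<^sup>2) \<le> M"
          unfolding ME by (rule cSup_upper[OF e0]) (use bnd in \<open>auto intro!: bdd_aboveI\<close>)
        hence M0': "M \<ge> 0" by (meson order.trans real_sqrt_ge_zero sum_nonneg zero_le_power2)
        hence Mp: "M > 0" using M0 by simp
        have "M\<^sup>2 \<le> B\<^sup>2" using MB Mp by (intro power_mono) auto
        also have "B\<^sup>2 = 1 / (\<delta>\<^sup>2 - S)" using gap by (simp add: B_def power_divide)
        finally have "M\<^sup>2 \<le> 1 / (\<delta>\<^sup>2 - S)" .
        hence "\<delta>\<^sup>2 - S \<le> 1 / M\<^sup>2" using gap Mp by (simp add: field_simps)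
        thus ?thesis by simp
      qed
      define Rr where "Rr = 1 / M\<^sup>2 + S"
      have Rp: "Rr > 0" using M0 Spos by (simp add: Rr_def add_pos_nonneg)
      have tp: "1 / (N * M)\<^sup>2 + S / N\<^sup>2 > 0" using M0 N0 Spos by (intro add_pos_nonneg) auto
      have kap: "kappa_at n d I P x = ereal (1 / sqrt (1 / (N * M)\<^sup>2 + S / N\<^sup>2))"
        using surj False N0 tp unfolding kappa_at_def mu_proj_def Let_def
        by (simp add: N_def[symmetric] M_def[symmetric] S_def[symmetric] add_pos_nonneg)
      have "1 / (N * M)\<^sup>2 + S / N\<^sup>2 = Rr / N\<^sup>2" using Np M0 by (simp add: Rr_def field_simps power_mult_distrib)
      hence "1 / sqrt (1 / (N * M)\<^sup>2 + S / N\<^sup>2) = N / sqrt Rr" using Np by (simp add: real_sqrt_divide)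
      also have "\<dots> \<le> N / \<delta>"
      proof (intro divide_left_mono)
        show "\<delta> \<le> sqrt Rr" using R \<delta>pos by (simp add: Rr_def real_le_rsqrt)
      qed (use Np \<delta>pos Rp in \<open>auto intro!: mult_pos_pos\<close>)
      finally show ?thesis using kap by (simp add: I_def N_def \<delta>_def)
    qed
  qed
qed



lemma weyl_norm_mono:
  assumes "I \<subseteq> J" "finite J"
  shows "weyl_norm n d I P \<le> weyl_norm n d J P"
  unfolding weyl_norm_def weyl_inner_wi
  by (rule real_sqrt_le_mono, rule sum_mono2) (use assms wi_nonneg in auto)

theorem theorem4p10:
  fixes n q s :: nat and d :: "nat \<Rightarrow> nat" and P :: "nat \<Rightarrow> (nat \<Rightarrow> nat) \<Rightarrow> real"
  assumes "q \<le> n + 1"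
    and "\<forall>i<q+s. 1 \<le> d i"
    and "P \<in> Hd n d (q + s)"
    and "P \<noteq> (\<lambda>i a. 0)"
  shows "kappa_star n d q s P \<le> ereal (weyl_norm n d {..<q+s} P) / ereal (dist_Sigma_star n d q s P)"
proof -
  define \<delta> where "\<delta> = dist_Sigma_star n d q s P"
  define Nt where "Nt = weyl_norm n d {..<q+s} P"
  have \<delta>0: "0 \<le> \<delta>" unfolding \<delta>_def by (rule dist_nonneg[OF assms(1)])
  have Ntp: "Nt > 0"
  proof -
    obtain i a where ia: "P i a \<noteq> 0" using assms(4) by (auto simp: fun_eq_iff)
    have i: "i < q + s"
    proof (rule ccontr)
      assume "\<not> i < q + s"
      hence "q + s \<le> i" by simp
      thus False using assms(3) ia unfolding Hd_def by auto
    qed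
    have a: "a \<in> mons n (d i)" using assms(3) ia unfolding Hd_def by blast
    have sq: "0 < P i a * P i a" using ia not_real_square_gt_zero by blast
    have "0 < P i a * P i a / multinom n (d i) a" using sq multinom_pos by (rule divide_pos_pos)
    also have "\<dots> \<le> wi n (d i) (P i) (P i)" unfolding wi_def
      by (rule member_le_sum[OF a]) (auto intro!: divide_nonneg_pos multinom_pos simp: finite_mons)
    also have "\<dots> \<le> weyl_inner n d {..<q+s} P P" unfolding weyl_inner_wi
      by (rule member_le_sum) (use i wi_nonneg in auto)
    finally show ?thesis by (simp add: Nt_def weyl_norm_def)
  qed
  show ?thesis
  proof (cases "\<delta> = 0")
    case True thus ?thesis using Ntp by (simp add: \<delta>_def[symmetric] Nt_def[symmetric])
  next
    case False
    hence \<delta>p: "\<delta> > 0" using \<delta>0 by simp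
    have "kappa_star n d q s P \<le> ereal (Nt / \<delta>)"
      unfolding kappa_star_def kappa_def
    proof (intro SUP_least)
      fix L x assume L: "L \<in> {L. L \<subseteq> {q..<q + s} \<and> q + card L \<le> n + 1}" and x: "x \<in> sphere_n n"
      have "kappa_at n d ({..<q} \<union> L) P x \<le> ereal (weyl_norm n d ({..<q} \<union> L) P / \<delta>)"
        using local_bound[OF assms(1,2,3) _ _ x] L \<delta>p by (simp add: \<delta>_def)
      also have "\<dots> \<le> ereal (Nt / \<delta>)"
      proof -
        have "L \<subseteq> {..<q+s}" using L by auto
        hence "weyl_norm n d ({..<q} \<union> L) P \<le> Nt"
          unfolding Nt_def by (intro weyl_norm_mono) auto
        thus ?thesis using \<delta>p by (simp add: divide_right_mono)
      qed
      finally show "kappa_at n d ({..<q} \<union> L) P x \<le> ereal (Nt / \<delta>)" .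
    qed
    thus ?thesis using \<delta>p by (simp add: \<delta>_def[symmetric] Nt_def[symmetric])
  qed
qed


end
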